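(* For every integer $n\ge2$, \[ \sum_{j=0}^{n}B_j=\mathbb{B}_n^{(2)}(1)+B_n-\mathbb{B}_n^{(2)}-1 . \]
   Context: $B_j$ is the $j$th Bernoulli number ($\frac{t}{e^t-1}=\sum_{m\ge0}B_m\frac{t^m}{m!}$). The poly-Bernoulli polynomials are defined by $\sum_{n\ge0}\mathbb{B}_n^{(p)}(x)\frac{t^n}{n!}=\frac{\mathrm{Li}_p(1-e^{-t})}{1-e^{-t}}e^{xt}$ with $\mathrm{Li}_p(z)=\sum_{m\ge1}z^m/m^p$; $\mathbb{B}_n^{(2)}(x)$ is the di-Bernoulli polynomial and $\mathbb{B}_n^{(2)}=\mathbb{B}_n^{(2)}(0)$ the di-Bernoulli number. *)

theory Defs
  imports "HOL-Computational_Algebra.Formal_Power_Series"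
begin

definition bernoulli_egf :: "real fps" where
  "bernoulli_egf = fps_X / (fps_exp 1 - 1)"

definition bernoulli_num :: "nat \<Rightarrow> real" where
  "bernoulli_num m = fact m * fps_nth bernoulli_egf m"

definition polylog_fps :: "nat \<Rightarrow> real fps" where
  "polylog_fps p = Abs_fps (\<lambda>m. if m = 0 then 0 else 1 / (real m) ^ p)"

definition poly_bernoulli_egf :: "nat \<Rightarrow> real \<Rightarrow> real fps" where
  "poly_bernoulli_egf p x =
     (fps_compose (polylog_fps p) (1 - fps_exp (-1)) / (1 - fps_exp (-1))) * fps_exp x"

definition poly_bernoulli_poly :: "nat \<Rightarrow> nat \<Rightarrow> real \<Rightarrow> real" where
  "poly_bernoulli_poly p n x = fact n * fps_nth (poly_bernoulli_egf p x) n"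

end

theory Submission imports Defs begin
unbundle fps_syntax

definition "Li1 = Abs_fps (\<lambda>m. if m = 0 then 0 else 1 / real m)"

lemma E_M: "fps_exp (1::real) * fps_exp (-1) = 1"
proof -
  have "fps_exp (1::real) * fps_exp (-1) = fps_exp (1 + -1)" by (rule fps_exp_add_mult[symmetric])
  also have "\<dots> = 1" by (rule fps_ext) (simp add: power_0_left)
  finally show ?thesis .
qed

lemma Li1_X: "fps_X * fps_deriv (polylog_fps 2) = Li1"
  by (rule fps_ext) (auto simp: polylog_fps_def Li1_def power2_eq_square field_simps of_nat_diff)

lemma Li1_deriv: "(1 - fps_X) * fps_deriv Li1 = (1::real fps)"
proof -
  have "fps_deriv Li1 = Abs_fps (\<lambda>_. 1)"
    by (rule fps_ext) (simp add: Li1_def field_simps del: of_nat_Suc)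
  then show ?thesis by (intro fps_ext) (simp add: algebra_simps)
qed

lemma u0: "(1 - fps_exp (-1::real)) $ 0 = 0" by simp

lemma Li1_comp: "Li1 oo (1 - fps_exp (-1)) = fps_X"
proof -
  let ?u = "1 - fps_exp (-1::real)"
  have d: "fps_deriv ?u = fps_exp (-1)" by (rule fps_ext) simp
  have "((1 - fps_X) oo ?u) * (fps_deriv Li1 oo ?u) = 1"
    using arg_cong[OF Li1_deriv, of "\<lambda>f. f oo ?u"] by (simp add: fps_compose_mult_distrib)
  moreover have "(1 - fps_X) oo ?u = fps_exp (-1)"
    by (simp add: fps_compose_sub_distrib)
  ultimately have e: "fps_exp (-1) * (fps_deriv Li1 oo ?u) = 1" by simp
  have h: "fps_deriv (Li1 oo ?u) = (fps_deriv Li1 oo ?u) * fps_deriv ?u"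
    by (rule fps_compose_deriv) simp
  have "fps_deriv (Li1 oo ?u) = 1" unfolding h d using e by (simp only: mult.commute)
  hence "fps_deriv (Li1 oo ?u) = fps_deriv fps_X" by simp
  hence "Li1 oo ?u = fps_const ((Li1 oo ?u)$0 - fps_X$0) + fps_X" 
    by (subst (asm) fps_deriv_eq_iff) 
  moreover have "(Li1 oo ?u)$0 = 0" by (simp add: Li1_def)
  ultimately show ?thesis by simp
qed

lemma key_fps:
  defines "u \<equiv> 1 - fps_exp (-1::real)" and "L \<equiv> polylog_fps 2 oo (1 - fps_exp (-1::real))"
  shows "fps_deriv L = bernoulli_egf"
    and "L / u * (fps_exp 1 - 1) = L * fps_exp 1"
    and "bernoulli_egf * (fps_exp 1 - 1) = fps_X"
proof -
  let ?E = "fps_exp (1::real)" and ?M = "fps_exp (-1::real)"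
  let ?D = "fps_deriv (polylog_fps 2)"
  have d: "fps_deriv u = ?M" unfolding u_def by (rule fps_ext) simp
  have u0: "u $ 0 = 0" unfolding u_def by simp
  have dL: "fps_deriv L = (?D oo u) * ?M"
    unfolding L_def u_def[symmetric] using u0 d by (simp add: fps_compose_deriv)
  have Xu: "u * (?D oo u) = fps_X"
  proof -
    have "(fps_X oo u) * (?D oo u) = Li1 oo u"
      using arg_cong[OF Li1_X, of "\<lambda>f. f oo u"] u0 by (simp add: fps_compose_mult_distrib)
    then show ?thesis using u0 Li1_comp unfolding u_def[symmetric] by simp
  qed
  have Eu: "?E - 1 = u * ?E"
    unfolding u_def using E_M by (simp add: algebra_simps)
  have E1nz: "?E - 1 \<noteq> 0"
  proof
    assume "?E - 1 = 0"
    hence "(?E - 1) $ 1 = 0" by simp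
    thus False by simp
  qed
  have sdE: "subdegree (?E - 1) \<le> 1" by (rule subdegree_leI) simp
  show B: "bernoulli_egf * (?E - 1) = fps_X"
    unfolding bernoulli_egf_def
    by (rule fps_times_divide_eq[OF E1nz]) (use sdE in simp)
  have "fps_deriv L * (?E - 1) = (?D oo u) * u * (?M * ?E)"
    unfolding dL Eu by (simp add: algebra_simps)
  also have "\<dots> = fps_X" using Xu E_M by (simp add: algebra_simps)
  finally have "fps_deriv L * (?E - 1) = bernoulli_egf * (?E - 1)" using B by simp
  then show "fps_deriv L = bernoulli_egf" using E1nz by simp
  have unz: "u \<noteq> 0"
  proof
    assume "u = 0" hence "u $ 1 = 0" by simp
    thus False unfolding u_def by simp
  qed
  have sdu: "subdegree u = 1"
    by (rule subdegreeI) (use u0 in \<open>auto simp: u_def\<close>)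
  have L0: "L $ 0 = 0" unfolding L_def by (simp add: polylog_fps_def)
  show "L / u * (?E - 1) = L * ?E"
  proof (cases "L = 0")
    case True then show ?thesis by simp
  next
    case False
    have "subdegree L \<ge> 1" by (rule subdegree_geI[OF False]) (use L0 in auto)
    hence "L / u * u = L" using sdu unz by (intro fps_times_divide_eq) auto
    then show ?thesis unfolding Eu by (metis mult.assoc)
  qed
qed

lemma L_nth:
  "fact (Suc k) * (polylog_fps 2 oo (1 - fps_exp (-1::real))) $ Suc k = bernoulli_num k"
proof -
  have "fps_deriv (polylog_fps 2 oo (1 - fps_exp (-1::real))) $ k = bernoulli_egf $ k"
    using key_fps(1) by simp
  then show ?thesis unfolding bernoulli_num_def
    by (simp add: field_simps del: of_nat_Suc)
qed

lemma bern_rec: "(\<Sum>k<n. real (n choose k) * bernoulli_num k) = (if n = 1 then 1 else 0)"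
proof -
  have "(bernoulli_egf * (fps_exp 1 - 1)) $ n = fps_X $ n" using key_fps(3) by simp
  hence "(\<Sum>i=0..n. bernoulli_egf $ i * (fps_exp 1 - 1) $ (n - i)) = (if n = 1 then 1 else 0)"
    by (simp add: fps_mult_nth)
  hence "fact n * (\<Sum>i=0..n. bernoulli_egf $ i * (fps_exp 1 - 1) $ (n - i)) = fact n * (if n = 1 then 1 else 0)"
    by simp
  also have "\<dots> = (if n = 1 then 1 else 0)" by simp
  finally have eq: "(\<Sum>i=0..n. fact n * (bernoulli_egf $ i * (fps_exp 1 - 1) $ (n - i))) = (if n = 1 then 1 else 0)"
    by (simp add: sum_distrib_left)
  have "(\<Sum>i=0..n. fact n * (bernoulli_egf $ i * (fps_exp 1 - 1) $ (n - i)))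
      = (\<Sum>i<n. real (n choose i) * bernoulli_num i)"
  proof -
    have "{0..n} = insert n {..<n}" by auto
    hence "(\<Sum>i=0..n. fact n * (bernoulli_egf $ i * (fps_exp 1 - 1) $ (n - i)))
        = (\<Sum>i<n. fact n * (bernoulli_egf $ i * (fps_exp 1 - 1) $ (n - i)))" by simp
    also have "\<dots> = (\<Sum>i<n. real (n choose i) * bernoulli_num i)"
    proof (rule sum.cong)
      fix i assume "i \<in> {..<n}"
      hence i: "i < n" by simp
      show "fact n * (bernoulli_egf $ i * (fps_exp 1 - 1) $ (n - i)) = real (n choose i) * bernoulli_num i"
      proof -
        have a: "(fps_exp 1 - 1) $ (n - i) = (1::real) / fact (n - i)" using i by (auto simp: fps_one_nth)
        have b: "real (n choose i) = fact n / (fact i * fact (n - i))"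
          using i by (intro binomial_fact) simp
        have c: "(fact i :: real) \<noteq> 0" "(fact (n - i) :: real) \<noteq> 0" by simp_all
        show ?thesis unfolding a b bernoulli_num_def using c by (simp add: divide_simps)
      qed
    qed simp
    finally show ?thesis .
  qed
  with eq show ?thesis by simp
qed

lemma S_formula:
  "(\<Sum>j<n. real (n choose Suc j) * bernoulli_num j) = (\<Sum>j<n. bernoulli_num j) + (if n \<ge> 2 then 1 else 0)"
proof (induction n)
  case 0 then show ?case by simp
next
  case (Suc n)
  have "(\<Sum>j<Suc n. real (Suc n choose Suc j) * bernoulli_num j)
      = (\<Sum>j<Suc n. real (n choose j) * bernoulli_num j) + (\<Sum>j<Suc n. real (n choose Suc j) * bernoulli_num j)"
    by (simp add: sum.distrib algebra_simps)
  also have "(\<Sum>j<Suc n. real (n choose j) * bernoulli_num j) = (if n = 1 then 1 else 0) + bernoulli_num n"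
    using bern_rec[of n] by simp
  also have "(\<Sum>j<Suc n. real (n choose Suc j) * bernoulli_num j) = (\<Sum>j<n. real (n choose Suc j) * bernoulli_num j)"
    by simp
  finally show ?case using Suc.IH by auto
qed

lemma LE_nth:
  "fact n * ((polylog_fps 2 oo (1 - fps_exp (-1::real))) * fps_exp 1) $ n
     = (\<Sum>j<n. real (n choose Suc j) * bernoulli_num j)"
proof -
  let ?L = "polylog_fps 2 oo (1 - fps_exp (-1::real))"
  have L0: "?L $ 0 = 0" by (simp add: polylog_fps_def)
  have "fact n * (?L * fps_exp 1) $ n = (\<Sum>i=0..n. fact n * (?L $ i * fps_exp 1 $ (n - i)))"
    by (simp add: fps_mult_nth sum_distrib_left)
  also have "\<dots> = fact n * (?L $ 0 * fps_exp 1 $ (n - 0)) + (\<Sum>j<n. fact n * (?L $ Suc j * fps_exp 1 $ (n - Suc j)))"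
    by (simp only: atLeast0AtMost sum.atMost_shift)
  also have "\<dots> = (\<Sum>j<n. fact n * (?L $ Suc j * fps_exp 1 $ (n - Suc j)))"
    by (simp only: L0 mult_zero_left mult_zero_right add_0_left)
  also have "\<dots> = (\<Sum>j<n. real (n choose Suc j) * bernoulli_num j)"
  proof (rule sum.cong)
    fix j assume "j \<in> {..<n}"
    hence j: "Suc j \<le> n" by simp
    have ee: "fps_exp (1::real) $ (n - Suc j) = 1 / fact (n - Suc j)" by simp
    have c: "(fact (Suc j) :: real) \<noteq> 0" "(fact (n - Suc j) :: real) \<noteq> 0" by simp_all
    have "fact n * (?L $ Suc j * fps_exp 1 $ (n - Suc j))
        = (fact n / (fact (Suc j) * fact (n - Suc j))) * (fact (Suc j) * ?L $ Suc j)"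
      unfolding ee using c by (simp add: divide_simps del: of_nat_Suc fact_Suc)
    also have "\<dots> = real (n choose Suc j) * bernoulli_num j"
      by (simp only: L_nth binomial_fact[OF j])
    finally show "fact n * (?L $ Suc j * fps_exp 1 $ (n - Suc j)) = real (n choose Suc j) * bernoulli_num j" .
  qed simp
  finally show ?thesis .
qed

theorem corollary3:
  fixes n :: nat
  assumes "n \<ge> 2"
  shows "(\<Sum>j=0..n. bernoulli_num j) =
           poly_bernoulli_poly 2 n 1 + bernoulli_num n - poly_bernoulli_poly 2 n 0 - 1"
proof -
  let ?L = "polylog_fps 2 oo (1 - fps_exp (-1::real))"
  let ?u = "1 - fps_exp (-1::real)"
  have e0: "fps_exp (0::real) = 1" by (rule fps_ext) (simp add: power_0_left)
  have "poly_bernoulli_poly 2 n 1 - poly_bernoulli_poly 2 n 0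
      = fact n * ((?L / ?u) * (fps_exp 1 - 1)) $ n"
    unfolding poly_bernoulli_poly_def poly_bernoulli_egf_def e0
    by (simp add: algebra_simps)
  also have "\<dots> = fact n * (?L * fps_exp 1) $ n" using key_fps(2) by simp
  also have "\<dots> = (\<Sum>j<n. bernoulli_num j) + 1" using LE_nth S_formula[of n] assms by simp
  finally have "poly_bernoulli_poly 2 n 1 - poly_bernoulli_poly 2 n 0 = (\<Sum>j<n. bernoulli_num j) + 1" .
  moreover have "(\<Sum>j=0..n. bernoulli_num j) = (\<Sum>j<n. bernoulli_num j) + bernoulli_num n"
    by (simp add: atLeast0AtMost lessThan_Suc_atMost[symmetric])
  ultimately show ?thesis by simp
qed

end
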